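(* Let $\Gamma$ be a telescopic numerical semigroup minimally generated by $r_0<r_1<\cdots<r_h$. If $h\ge 2$, then $r_h\ge 2^{h+1}-1$.
   Context: A numerical semigroup is a submonoid of $(\mathbb N,+)$ with finite complement in $\mathbb N$; it has a unique minimal generating system. $\langle X\rangle$ is the submonoid generated by $X$. For an arrangement $(r_0,\ldots,r_h)$ of the minimal generators, set $d_k=\gcd(r_0,\ldots,r_{k-1})$ for $k=1,\ldots,h+1$. Gluing: a set $A$ of positive integers with nontrivial partition $A=A_1\cup A_2$ is the gluing of $A_1$ and $A_2$ if $\mathrm{lcm}(\gcd A_1,\gcd A_2)\in\langle A_1\rangle\cap\langle A_2\rangle$. $\Gamma$ is free for the arrangement $(r_0,\ldots,r_h)$ if $h=0$, or $h\ge1$, $\{r_0,\ldots,r_h\}$ is the gluing of $\{r_0,\ldots,r_{h-1}\}$ and $\{r_h\}$, and $\langle r_0/d_h,\ldots,r_{h-1}/d_h\rangle$ is free for the arrangement $(r_0/d_h,\ldots,r_{h-1}/d_h)$. $\Gamma$ is telescopic if it is free for the arrangement of its minimal generators in increasing order $r_0<\cdots<r_h$. *)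

theory Defs
  imports Main
begin

inductive_set monoid_gen :: "nat set \<Rightarrow> nat set" for X :: "nat set" where
  zero: "0 \<in> monoid_gen X"
| add: "a \<in> X \<Longrightarrow> x \<in> monoid_gen X \<Longrightarrow> a + x \<in> monoid_gen X"

definition numerical_semigroup :: "nat set \<Rightarrow> bool" where
  "numerical_semigroup S \<longleftrightarrow> 0 \<in> S \<and> (\<forall>x\<in>S. \<forall>y\<in>S. x + y \<in> S) \<and> finite (UNIV - S)"

definition minimal_gens :: "nat set \<Rightarrow> bool" where
  "minimal_gens G \<longleftrightarrow> (\<forall>g\<in>G. g \<notin> monoid_gen (G - {g}))"

definition minimal_generating_system :: "nat set \<Rightarrow> nat set \<Rightarrow> bool" where
  "minimal_generating_system S G \<longleftrightarrow> monoid_gen G = S \<and> minimal_gens G"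

definition gluing :: "nat set \<Rightarrow> nat set \<Rightarrow> nat set \<Rightarrow> bool" where
  "gluing A A1 A2 \<longleftrightarrow> (\<forall>a\<in>A. 0 < a) \<and> A = A1 \<union> A2 \<and> A1 \<inter> A2 = {} \<and> A1 \<noteq> {} \<and> A2 \<noteq> {}
     \<and> lcm (Gcd A1) (Gcd A2) \<in> monoid_gen A1 \<inter> monoid_gen A2"

(* <set rs> is free for the arrangement rs = [r_0,...,r_h] of its minimal generators;
   d_h = gcd(r_0,...,r_{h-1}) = Gcd (set (butlast rs)) *)
function free_arr :: "nat list \<Rightarrow> bool" where
  "free_arr rs \<longleftrightarrow> rs \<noteq> [] \<and> distinct rs \<and> minimal_gens (set rs) \<and>
     (if length rs \<le> 1 then True else
       (gluing (set rs) (set (butlast rs)) {last rs} \<and>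
        free_arr (map (\<lambda>x. x div Gcd (set (butlast rs))) (butlast rs))))"
  by auto
termination
  by (relation "measure length") auto

definition telescopic :: "nat set \<Rightarrow> nat list \<Rightarrow> bool" where
  "telescopic S rs \<longleftrightarrow> numerical_semigroup S \<and> sorted_wrt (<) rs
     \<and> minimal_generating_system S (set rs) \<and> free_arr rs"

end

theory Submission
  imports Defs
begin

declare free_arr.simps[simp del]

lemma div_strict:
  fixes a b d :: nat
  assumes "d dvd a" "d dvd b" "a < b"
  shows "a div d < b div d"
proof -
  obtain p where p: "a = d * p" using assms(1) by blast
  obtain q where q: "b = d * q" using assms(2) by blast
  have "d > 0" using assms p q by (cases "d = 0") auto
  then show ?thesis using p q assms(3) by simp
qed

lemma key:
  "free_arr rs \<Longrightarrow> sorted_wrt (<) rs \<Longrightarrow> length rs = h + 1 \<Longrightarrow> h \<ge> 1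
   \<Longrightarrow> rs ! h \<ge> 2 ^ (h + 1) - 1"
proof (induction h arbitrary: rs)
  case 0
  then show ?case by simp
next
  case (Suc k)
  have fa: "rs \<noteq> [] \<and> distinct rs \<and> minimal_gens (set rs) \<and>
     (if length rs \<le> 1 then True else
       (gluing (set rs) (set (butlast rs)) {last rs} \<and>
        free_arr (map (\<lambda>x. x div Gcd (set (butlast rs))) (butlast rs))))"
    using Suc.prems(1) free_arr.simps[of rs] by blast
  show ?case
  proof (cases "k = 0")
    case True
    then obtain a b where rs: "rs = [a, b]" using Suc.prems(3)
      by (auto simp: length_Suc_conv)
    have mg: "minimal_gens {a, b}" using fa rs by simp
    have ab: "a < b" using Suc.prems(2) rs by simp
    have "a \<noteq> b" using ab by simp
    then have "{a,b} - {a} = {b}" "{a,b} - {b} = {a}" by auto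
    then have n1: "a \<notin> monoid_gen {b}" and n2: "b \<notin> monoid_gen {a}"
      using mg unfolding minimal_gens_def by (metis insertCI)+
    have "a \<noteq> 0" using n1 monoid_gen.zero by metis
    moreover have "a \<noteq> 1"
    proof
      assume a1: "a = 1"
      have "\<And>n. n \<in> monoid_gen {1}"
      proof -
        fix n :: nat show "n \<in> monoid_gen {1}"
          by (induction n) (auto intro: monoid_gen.intros monoid_gen.add[of 1, simplified])
      qed
      then show False using n2 a1 by blast
    qed
    ultimately have "b \<ge> 3" using ab by linarith
    then show ?thesis using rs True by simp
  next
    case False
    define bs where "bs = butlast rs"
    define l where "l = last rs"
    define d where "d = Gcd (set bs)"
    have rsne: "rs \<noteq> []" using fa by blast
    have rseq: "rs = bs @ [l]" using rsne unfolding bs_def l_def by simp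
    have lenbs: "length bs = k + 1" using Suc.prems(3) rseq by simp
    have lr: "\<not> length rs \<le> 1" using Suc.prems(3) by simp
    have glu: "gluing (set rs) (set bs) {l}" using fa lr bs_def l_def by simp
    have fcs: "free_arr (map (\<lambda>x. x div d) bs)" using fa lr bs_def d_def by simp
    have dist: "distinct rs" using fa by blast
    have lnot: "l \<notin> set bs" using dist rseq by simp
    have setbs: "set rs - {l} = set bs" using rseq lnot by auto
    have mgr: "minimal_gens (set rs)" using fa by blast
    have lnm: "l \<notin> monoid_gen (set bs)"
      proof -
      have "l \<in> set rs" using rseq by simp
      then have "l \<notin> monoid_gen (set rs - {l})" using mgr unfolding minimal_gens_def by blast
      then show ?thesis using setbs by simp
    qed
    have "lcm (Gcd (set bs)) (Gcd {l}) \<in> monoid_gen (set bs) \<inter> monoid_gen {l}"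
      using glu unfolding gluing_def by (elim conjE) assumption
    then have lcmin: "lcm d l \<in> monoid_gen (set bs)" unfolding d_def by simp
    have d1: "d \<noteq> 1" using lcmin lnm by auto
    have b0in: "bs ! 0 \<in> set bs" using lenbs by simp
    have pos: "bs ! 0 > 0" using glu b0in rseq unfolding gluing_def by auto
    have "d dvd bs ! 0" using b0in d_def by simp
    then have d0: "d \<noteq> 0" using pos by auto
    have d2: "d \<ge> 2" using d0 d1 by linarith
    define cs where "cs = map (\<lambda>x. x div d) bs"
    have sbs: "sorted_wrt (<) bs" using Suc.prems(2) rseq by (simp add: sorted_wrt_append)
    have dvdall: "\<And>i. i < length bs \<Longrightarrow> d dvd bs ! i" using d_def by simp
    have scs: "sorted_wrt (<) cs"
      unfolding sorted_wrt_iff_nth_less cs_def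
    proof (intro allI impI)
      fix i j assume ij: "i < j" "j < length (map (\<lambda>x. x div d) bs)"
      then have "bs ! i < bs ! j" using sbs sorted_wrt_iff_nth_less by fastforce
      then show "map (\<lambda>x. x div d) bs ! i < map (\<lambda>x. x div d) bs ! j"
        using ij dvdall div_strict by simp
    qed
    have lencs: "length cs = k + 1" using lenbs cs_def by simp
    have "k \<ge> 1" using False by simp
    then have ih: "cs ! k \<ge> 2 ^ (k + 1) - 1" using Suc.IH fcs scs lencs cs_def by blast
    have csk: "cs ! k = bs ! k div d" using lenbs cs_def by simp
    have e1: "bs ! k = d * (bs ! k div d)" using dvdall lenbs by simp
    have e2: "d * (bs ! k div d) \<ge> 2 * (2 ^ (k + 1) - 1)"
      using mult_le_mono[OF d2 ih] csk by simp
    have e3: "2 * (2 ^ (k + 1) - 1) = 2 ^ (k + 2) - (2::nat)" by (simp add: right_diff_distrib')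
    have bk: "bs ! k \<ge> 2 ^ (k + 2) - 2" using e1 e2 e3 by linarith
    have sall: "\<forall>i j. i < j \<longrightarrow> j < length rs \<longrightarrow> rs ! i < rs ! j"
      using Suc.prems(2) sorted_wrt_iff_nth_less by blast
    have lt: "rs ! k < rs ! Suc k"
      using sall[rule_format, of k "Suc k"] Suc.prems(3) by simp
    moreover have "rs ! k = bs ! k" using rseq lenbs by (simp add: nth_append)
    ultimately have "rs ! Suc k > bs ! k" by simp
    moreover have "(2::nat) ^ (Suc k + 1) = 2 ^ (k + 2)" by simp
    moreover have "(2::nat) ^ (k + 2) = 4 * 2 ^ k" by (simp add: power_add)
    moreover have "(1::nat) \<le> 2 ^ k" by simp
    ultimately show ?thesis using bk by linarith
  qed
qed

theorem proposition4p1: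
  fixes S :: "nat set" and rs :: "nat list" and h :: nat
  assumes "telescopic S rs"
    and "length rs = h + 1"
    and "h \<ge> 2"
  shows "rs ! h \<ge> 2 ^ (h + 1) - 1"
  using key[of rs h] assms unfolding telescopic_def by simp

end
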